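(* Let $(X_1,Y_1),\ldots,(X_m,Y_m)$ be a sequence of independent pairs of Bernoulli random variables (the pairs are mutually independent; $X_i$ and $Y_i$ within a pair may be dependent) such that $\mathbb{E}[X_i]=p_i$, $\mathbb{E}[Y_i]=q_i$ and $\mathbb{E}[X_iY_i]=0$ (i.e., $X_i$ and $Y_i$ are never both $1$). Let $\mu_x=\sum_i p_i$, $\mu_y=\sum_i q_i$, $X=\sum_i X_i$, $Y=\sum_i Y_i$. If $\mu_x+\mu_y>1$, then $$\frac{\mu_x-1}{\mu_x+\mu_y-1}\le\mathbb{E}\Big[\frac{X}{X+Y}\Big]\le\frac{\mu_x}{\mu_x+\mu_y-1}.$$
   Context: Convention: in the expression $\frac{X}{X+Y}$, the value $0/0$ is interpreted as $1$ for the left inequality and as $0$ for the right inequality. *)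

theory Defs
  imports "HOL-Probability.Probability"
begin

(* Ratio X/(X+Y) with the convention 0/0 = 1 (used for the lower bound). *)
definition ratio_lo :: "real \<Rightarrow> real \<Rightarrow> real" where
  "ratio_lo x y = (if x + y = 0 then 1 else x / (x + y))"

(* Ratio X/(X+Y) with the convention 0/0 = 0 (used for the upper bound). *)
definition ratio_hi :: "real \<Rightarrow> real \<Rightarrow> real" where
  "ratio_hi x y = (if x + y = 0 then 0 else x / (x + y))"

end

theory Submission
  imports Defs
begin

locale bsetup = prob_space M for M :: "'a measure" +
  fixes X Y :: "nat \<Rightarrow> 'a \<Rightarrow> real" and m :: nat
  assumes ind: "indep_vars (\<lambda>i. borel \<Otimes>\<^sub>M borel) (\<lambda>i \<omega>. (X i \<omega>, Y i \<omega>)) {..<m}"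
    and good: "AE \<omega> in M. \<forall>i\<in>{..<m}. X i \<omega> \<in> {0,1} \<and> Y i \<omega> \<in> {0,1} \<and> X i \<omega> * Y i \<omega> = 0"
begin

definition Dsum :: "nat set \<Rightarrow> 'a \<Rightarrow> real" where
  "Dsum K \<omega> = (\<Sum>k\<in>K. X k \<omega> + Y k \<omega>)"

lemma pair_meas: "i < m \<Longrightarrow> (\<lambda>\<omega>. (X i \<omega>, Y i \<omega>)) \<in> M \<rightarrow>\<^sub>M borel \<Otimes>\<^sub>M borel"
  using ind unfolding indep_vars_def by auto

lemma X_meas: "i < m \<Longrightarrow> X i \<in> borel_measurable M"
  using measurable_compose[OF pair_meas measurable_fst] by simp

lemma Y_meas: "i < m \<Longrightarrow> Y i \<in> borel_measurable M"
  using measurable_compose[OF pair_meas measurable_snd] by simp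

lemma Dsum_meas: "K \<subseteq> {..<m} \<Longrightarrow> Dsum K \<in> borel_measurable M"
  unfolding Dsum_def
  by (intro borel_measurable_sum borel_measurable_add X_meas Y_meas) auto

lemma Dsum_nonneg_AE: "K \<subseteq> {..<m} \<Longrightarrow> AE \<omega> in M. 0 \<le> Dsum K \<omega>"
  using good
proof eventually_elim
  case (elim \<omega>)
  assume K: "K \<subseteq> {..<m}"
  show ?case unfolding Dsum_def
  proof (intro sum_nonneg)
    fix k assume "k \<in> K" with K elim have "X k \<omega> \<in> {0,1}" "Y k \<omega> \<in> {0,1}" by auto
    then show "0 \<le> X k \<omega> + Y k \<omega>" by auto
  qed
qed

lemma good2: "AE \<omega> in M. (\<forall>i\<in>{..<m}. X i \<omega> \<in> {0,1} \<and> Y i \<omega> \<in> {0,1} \<and> X i \<omega> * Y i \<omega> = 0)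
   \<and> (\<forall>K. K \<subseteq> {..<m} \<longrightarrow> 0 \<le> Dsum K \<omega>)"
  using good
proof eventually_elim
  case (elim \<omega>)
  have "0 \<le> Dsum K \<omega>" if K: "K \<subseteq> {..<m}" for K
    unfolding Dsum_def
  proof (intro sum_nonneg)
    fix k assume "k \<in> K" with K elim have "X k \<omega> \<in> {0,1}" "Y k \<omega> \<in> {0,1}" by auto
    then show "0 \<le> X k \<omega> + Y k \<omega>" by auto
  qed
  with elim show ?case by blast
qed

lemma inv_int: "K \<subseteq> {..<m} \<Longrightarrow> integrable M (\<lambda>\<omega>. 1 / (1 + Dsum K \<omega>))"
proof (rule integrable_const_bound[where B=1])
  assume K: "K \<subseteq> {..<m}"
  show "AE x in M. norm (1 / (1 + Dsum K x)) \<le> 1"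
    using Dsum_nonneg_AE[OF K] by eventually_elim auto
  show "(\<lambda>\<omega>. 1 / (1 + Dsum K \<omega>)) \<in> borel_measurable M"
    using Dsum_meas[OF K] by measurable
qed

lemma indep_E:
  fixes f :: "real \<times> real \<Rightarrow> real"
  assumes j: "j < m" and K: "K \<subseteq> {..<m}" "j \<notin> K"
    and f: "f \<in> borel_measurable (borel \<Otimes>\<^sub>M borel)"
    and fi: "integrable M (\<lambda>\<omega>. f (X j \<omega>, Y j \<omega>))"
  shows "expectation (\<lambda>\<omega>. f (X j \<omega>, Y j \<omega>) * (1 / (1 + Dsum K \<omega>)))
       = expectation (\<lambda>\<omega>. f (X j \<omega>, Y j \<omega>)) * expectation (\<lambda>\<omega>. 1 / (1 + Dsum K \<omega>))"
proof -
  let ?P = "\<lambda>i \<omega>. (X i \<omega>, Y i \<omega>)"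
  have iv: "indep_var (Pi\<^sub>M {j} (\<lambda>i. borel \<Otimes>\<^sub>M borel)) (\<lambda>\<omega>. restrict (\<lambda>i. ?P i \<omega>) {j})
     (Pi\<^sub>M K (\<lambda>i. borel \<Otimes>\<^sub>M borel)) (\<lambda>\<omega>. restrict (\<lambda>i. ?P i \<omega>) K)"
    using K j by (intro indep_var_restrict[OF ind]) auto
  have m1: "(\<lambda>h. f (h j)) \<in> borel_measurable (Pi\<^sub>M {j} (\<lambda>i. borel \<Otimes>\<^sub>M borel))"
    by (rule measurable_compose[OF measurable_component_singleton[of j "{j}" "\<lambda>i. borel \<Otimes>\<^sub>M borel"] f]) simp
  have m2: "(\<lambda>h::nat \<Rightarrow> real \<times> real. 1 / (1 + (\<Sum>k\<in>K. fst (h k) + snd (h k)))) \<in> borel_measurable (Pi\<^sub>M K (\<lambda>i. borel \<Otimes>\<^sub>M borel))"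
  proof -
    have [measurable]: "(\<lambda>h::nat \<Rightarrow> real \<times> real. \<Sum>k\<in>K. fst (h k) + snd (h k)) \<in> borel_measurable (Pi\<^sub>M K (\<lambda>i. borel \<Otimes>\<^sub>M borel))"
    proof -
      have c: "(\<lambda>h::nat \<Rightarrow> real \<times> real. fst (h k) + snd (h k)) \<in> borel_measurable (Pi\<^sub>M K (\<lambda>i. borel \<Otimes>\<^sub>M borel))" if "k \<in> K" for k
      proof -
        have hk: "(\<lambda>h. h k) \<in> Pi\<^sub>M K (\<lambda>i. borel \<Otimes>\<^sub>M borel) \<rightarrow>\<^sub>M borel \<Otimes>\<^sub>M borel"
          using measurable_component_singleton[of k K "\<lambda>i. borel \<Otimes>\<^sub>M borel"] that by simp
        show ?thesis
          using borel_measurable_add[OF measurable_compose[OF hk measurable_fst] measurable_compose[OF hk measurable_snd]] by simp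
      qed
      show ?thesis using borel_measurable_sum[of K "\<lambda>k h. fst (h k) + snd (h k)", OF c] by simp
    qed
    show ?thesis by measurable
  qed
  have iv2: "indep_var borel ((\<lambda>h. f (h j)) \<circ> (\<lambda>\<omega>. restrict (\<lambda>i. ?P i \<omega>) {j}))
     borel ((\<lambda>h. 1 / (1 + (\<Sum>k\<in>K. fst (h k) + snd (h k)))) \<circ> (\<lambda>\<omega>. restrict (\<lambda>i. ?P i \<omega>) K))"
    by (rule indep_var_compose[OF iv m1 m2])
  have e1: "((\<lambda>h. f (h j)) \<circ> (\<lambda>\<omega>. restrict (\<lambda>i. ?P i \<omega>) {j})) = (\<lambda>\<omega>. f (X j \<omega>, Y j \<omega>))"
    by auto
  have e2: "((\<lambda>h. 1 / (1 + (\<Sum>k\<in>K. fst (h k) + snd (h k)))) \<circ> (\<lambda>\<omega>. restrict (\<lambda>i. ?P i \<omega>) K))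
     = (\<lambda>\<omega>. 1 / (1 + Dsum K \<omega>))"
    by (auto simp: Dsum_def intro!: sum.cong)
  show ?thesis
    using iv2 unfolding e1 e2
    by (intro indep_var_lebesgue_integral fi inv_int K)
qed


lemma X_int: assumes "i < m" shows "integrable M (X i)"
proof (rule integrable_const_bound[where B=1])
  show "AE x in M. norm (X i x) \<le> 1" using good
  proof eventually_elim
    case (elim x)
    from elim assms have "X i x \<in> {0,1}" by auto
    then show ?case by auto
  qed
qed (rule X_meas[OF assms])

lemma Y_int: assumes "i < m" shows "integrable M (Y i)"
proof (rule integrable_const_bound[where B=1])
  show "AE x in M. norm (Y i x) \<le> 1" using good
  proof eventually_elim
    case (elim x)
    from elim assms have "Y i x \<in> {0,1}" by auto
    then show ?case by auto
  qed
qed (rule Y_meas[OF assms])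

lemma E_nonneg:
  fixes f :: "real \<times> real \<Rightarrow> real"
  assumes j: "j < m"
    and fp: "\<And>x y. x \<in> {0,1} \<Longrightarrow> y \<in> {0,1} \<Longrightarrow> x * y = 0 \<Longrightarrow> f (x,y) \<in> {0,1} \<and> (f (x,y) = 1 \<longrightarrow> x + y = 1)"
  shows "0 \<le> expectation (\<lambda>\<omega>. f (X j \<omega>, Y j \<omega>))"
proof (rule integral_nonneg_AE)
  show "AE \<omega> in M. 0 \<le> f (X j \<omega>, Y j \<omega>)"
    using good
  proof eventually_elim
    case (elim \<omega>)
    then show ?case using fp[of "X j \<omega>" "Y j \<omega>"] j by auto
  qed
qed

lemma f_meas:
  fixes f :: "real \<times> real \<Rightarrow> real"
  assumes j: "j < m" and f: "f \<in> borel_measurable (borel \<Otimes>\<^sub>M borel)"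
  shows "(\<lambda>\<omega>. f (X j \<omega>, Y j \<omega>)) \<in> borel_measurable M"
  using measurable_compose[OF pair_meas[OF j] f] .

lemma f_int:
  fixes f :: "real \<times> real \<Rightarrow> real"
  assumes j: "j < m" and f: "f \<in> borel_measurable (borel \<Otimes>\<^sub>M borel)"
    and fp: "\<And>x y. x \<in> {0,1} \<Longrightarrow> y \<in> {0,1} \<Longrightarrow> x * y = 0 \<Longrightarrow> f (x,y) \<in> {0,1} \<and> (f (x,y) = 1 \<longrightarrow> x + y = 1)"
  shows "integrable M (\<lambda>\<omega>. f (X j \<omega>, Y j \<omega>))"
proof (rule integrable_const_bound[where B=1])
  show "AE \<omega> in M. norm (f (X j \<omega>, Y j \<omega>)) \<le> 1"
    using good
  proof eventually_elim
    case (elim \<omega>)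
    then show ?case using fp[of "X j \<omega>" "Y j \<omega>"] j by auto
  qed
qed (rule f_meas[OF j f])

lemma cong_f:
  fixes f :: "real \<times> real \<Rightarrow> real"
  assumes j: "j \<in> K" and K: "K \<subseteq> {..<m}"
    and fp: "\<And>x y. x \<in> {0,1} \<Longrightarrow> y \<in> {0,1} \<Longrightarrow> x * y = 0 \<Longrightarrow> f (x,y) \<in> {0,1} \<and> (f (x,y) = 1 \<longrightarrow> x + y = 1)"
  shows "AE \<omega> in M. f (X j \<omega>, Y j \<omega>) / Dsum K \<omega> = f (X j \<omega>, Y j \<omega>) * (1 / (1 + Dsum (K - {j}) \<omega>))"
  using good2
proof eventually_elim
  case (elim \<omega>)
  have fin: "finite K" using K finite_subset by blast
  have D: "Dsum K \<omega> = X j \<omega> + Y j \<omega> + Dsum (K - {j}) \<omega>"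
    unfolding Dsum_def using sum.remove[OF fin j] by simp
  have jm: "j < m" using j K by auto
  have h: "f (X j \<omega>, Y j \<omega>) \<in> {0,1} \<and> (f (X j \<omega>, Y j \<omega>) = 1 \<longrightarrow> X j \<omega> + Y j \<omega> = 1)"
    using fp[of "X j \<omega>" "Y j \<omega>"] elim jm by auto
  show ?case
  proof (cases "f (X j \<omega>, Y j \<omega>) = 0")
    case True then show ?thesis by simp
  next
    case False
    with h have "f (X j \<omega>, Y j \<omega>) = 1" "X j \<omega> + Y j \<omega> = 1" by auto
    then show ?thesis using D by simp
  qed
qed

lemma int_cong_f:
  fixes f :: "real \<times> real \<Rightarrow> real"
  assumes j: "j \<in> K" and K: "K \<subseteq> {..<m}" and f: "f \<in> borel_measurable (borel \<Otimes>\<^sub>M borel)"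
    and fp: "\<And>x y. x \<in> {0,1} \<Longrightarrow> y \<in> {0,1} \<Longrightarrow> x * y = 0 \<Longrightarrow> f (x,y) \<in> {0,1} \<and> (f (x,y) = 1 \<longrightarrow> x + y = 1)"
  shows "integrable M (\<lambda>\<omega>. f (X j \<omega>, Y j \<omega>) / Dsum K \<omega>)"
    and "expectation (\<lambda>\<omega>. f (X j \<omega>, Y j \<omega>) / Dsum K \<omega>) =
         expectation (\<lambda>\<omega>. f (X j \<omega>, Y j \<omega>)) * expectation (\<lambda>\<omega>. 1 / (1 + Dsum (K - {j}) \<omega>))"
proof -
  have jm: "j < m" using j K by auto
  have m1: "(\<lambda>\<omega>. f (X j \<omega>, Y j \<omega>) / Dsum K \<omega>) \<in> borel_measurable M"
    using f_meas[OF jm f] Dsum_meas[OF K] by measurable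
  have Kj: "K - {j} \<subseteq> {..<m}" using K by auto
  have m2: "(\<lambda>\<omega>. f (X j \<omega>, Y j \<omega>) * (1 / (1 + Dsum (K - {j}) \<omega>))) \<in> borel_measurable M"
    using f_meas[OF jm f] Dsum_meas[OF Kj] by measurable
  have i2: "integrable M (\<lambda>\<omega>. f (X j \<omega>, Y j \<omega>) * (1 / (1 + Dsum (K - {j}) \<omega>)))"
  proof (rule integrable_const_bound[where B=1])
    show "AE \<omega> in M. norm (f (X j \<omega>, Y j \<omega>) * (1 / (1 + Dsum (K - {j}) \<omega>))) \<le> 1"
      using good2
    proof eventually_elim
      case (elim \<omega>)
      then have "f (X j \<omega>, Y j \<omega>) \<in> {0,1}" using fp[of "X j \<omega>" "Y j \<omega>"] jm by auto
      moreover have "0 \<le> Dsum (K - {j}) \<omega>" using elim Kj by blast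
      ultimately show ?case by (auto simp: abs_mult)
    qed
  qed (rule m2)
  have ae: "AE \<omega> in M. f (X j \<omega>, Y j \<omega>) * (1 / (1 + Dsum (K - {j}) \<omega>)) = f (X j \<omega>, Y j \<omega>) / Dsum K \<omega>"
    using cong_f[OF j K fp] by (auto elim!: eventually_mono)
  show "integrable M (\<lambda>\<omega>. f (X j \<omega>, Y j \<omega>) / Dsum K \<omega>)"
    by (rule integrable_cong_AE_imp[OF i2 m1 ae])
  have "expectation (\<lambda>\<omega>. f (X j \<omega>, Y j \<omega>) / Dsum K \<omega>) =
        expectation (\<lambda>\<omega>. f (X j \<omega>, Y j \<omega>) * (1 / (1 + Dsum (K - {j}) \<omega>)))"
    by (rule integral_cong_AE[OF m1 m2 cong_f[OF j K fp]])
  also have "\<dots> = expectation (\<lambda>\<omega>. f (X j \<omega>, Y j \<omega>)) * expectation (\<lambda>\<omega>. 1 / (1 + Dsum (K - {j}) \<omega>))"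
    by (rule indep_E[OF jm _ _ f f_int[OF jm f fp]]) (use K in auto)
  finally show "expectation (\<lambda>\<omega>. f (X j \<omega>, Y j \<omega>) / Dsum K \<omega>) =
         expectation (\<lambda>\<omega>. f (X j \<omega>, Y j \<omega>)) * expectation (\<lambda>\<omega>. 1 / (1 + Dsum (K - {j}) \<omega>))" .
qed


lemma fp_sum: "\<And>x y. x \<in> {0,1} \<Longrightarrow> y \<in> {0,1} \<Longrightarrow> x * y = 0 \<Longrightarrow>
    (\<lambda>p::real\<times>real. fst p + snd p) (x,y) \<in> {0,1} \<and> ((\<lambda>p::real\<times>real. fst p + snd p) (x,y) = 1 \<longrightarrow> x + y = 1)"
  by auto

lemma meas_sum: "(\<lambda>p::real\<times>real. fst p + snd p) \<in> borel_measurable (borel \<Otimes>\<^sub>M borel)"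
  by measurable

lemma key_C:
  assumes i: "i < m" and mu: "1 < (\<Sum>k<m. expectation (X k)) + (\<Sum>k<m. expectation (Y k))"
  shows "expectation (\<lambda>\<omega>. 1 / (1 + Dsum ({..<m} - {i}) \<omega>))
     \<le> 1 / ((\<Sum>k<m. expectation (X k)) + (\<Sum>k<m. expectation (Y k)) - 1)"
proof -
  define J where "J = {..<m} - {i}"
  have J: "J \<subseteq> {..<m}" "finite J" "i \<notin> J" unfolding J_def by auto
  define a where "a = expectation (\<lambda>\<omega>. 1 / (1 + Dsum J \<omega>))"
  define r where "r j = expectation (X j) + expectation (Y j)" for j
  have rZ: "r j = expectation (\<lambda>\<omega>. X j \<omega> + Y j \<omega>)" if "j < m" for j
    unfolding r_def using X_int[OF that] Y_int[OF that] by simp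
  have r_nn: "0 \<le> r j" if "j < m" for j
    using E_nonneg[OF that fp_sum] rZ[OF that] by simp
  have r_le: "r i \<le> 1"
  proof -
    have "expectation (\<lambda>\<omega>. X i \<omega> + Y i \<omega>) \<le> expectation (\<lambda>\<omega>. 1::real)"
    proof (rule integral_mono_AE)
      show "integrable M (\<lambda>\<omega>. X i \<omega> + Y i \<omega>)" using X_int[OF i] Y_int[OF i] by simp
      show "integrable M (\<lambda>\<omega>. 1::real)" by simp
      show "AE \<omega> in M. X i \<omega> + Y i \<omega> \<le> 1" using good
      proof eventually_elim
        case (elim \<omega>)
        then have "X i \<omega> \<in> {0,1}" "Y i \<omega> \<in> {0,1}" "X i \<omega> * Y i \<omega> = 0" using i by auto
        then show ?case by auto
      qed
    qed
    then show ?thesis using rZ[OF i] prob_space by simp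
  qed
  have musplit: "(\<Sum>k<m. expectation (X k)) + (\<Sum>k<m. expectation (Y k)) = r i + (\<Sum>j\<in>J. r j)"
  proof -
    have "(\<Sum>k<m. expectation (X k)) + (\<Sum>k<m. expectation (Y k)) = (\<Sum>k<m. r k)"
      unfolding r_def by (simp add: sum.distrib)
    also have "\<dots> = r i + (\<Sum>j\<in>J. r j)"
      unfolding J_def using sum.remove[of "{..<m}" i r] i by simp
    finally show ?thesis .
  qed
  define mu where "mu = (\<Sum>k<m. expectation (X k)) + (\<Sum>k<m. expectation (Y k))"
  define nu where "nu = (\<Sum>j\<in>J. r j)"
  have nu_ge: "mu - 1 \<le> nu" using musplit r_le unfolding mu_def nu_def by simp
  have mu1: "0 < mu - 1" using mu unfolding mu_def by simp
  have step1: "a \<le> expectation (\<lambda>\<omega>. 1 / (1 + Dsum (J - {j}) \<omega>))" if j: "j \<in> J" for j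
    unfolding a_def
  proof (rule integral_mono_AE)
    have Jj: "J - {j} \<subseteq> {..<m}" using J by auto
    show "integrable M (\<lambda>\<omega>. 1 / (1 + Dsum J \<omega>))" by (rule inv_int[OF J(1)])
    show "integrable M (\<lambda>\<omega>. 1 / (1 + Dsum (J - {j}) \<omega>))" by (rule inv_int[OF Jj])
    show "AE \<omega> in M. 1 / (1 + Dsum J \<omega>) \<le> 1 / (1 + Dsum (J - {j}) \<omega>)"
      using good2
    proof eventually_elim
      case (elim \<omega>)
      have jm: "j < m" using j J by auto
      have D: "Dsum J \<omega> = X j \<omega> + Y j \<omega> + Dsum (J - {j}) \<omega>"
        unfolding Dsum_def using sum.remove[OF J(2) j] by simp
      have "X j \<omega> \<in> {0,1}" "Y j \<omega> \<in> {0,1}" using elim jm by auto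
      then have z: "0 \<le> X j \<omega> + Y j \<omega>" by auto
      have "0 \<le> Dsum (J - {j}) \<omega>" using elim Jj by blast
      then show ?case using D z by (intro divide_left_mono) auto
    qed
  qed
  have step2: "r j * expectation (\<lambda>\<omega>. 1 / (1 + Dsum (J - {j}) \<omega>)) = expectation (\<lambda>\<omega>. (X j \<omega> + Y j \<omega>) / Dsum J \<omega>)"
    if j: "j \<in> J" for j
    using int_cong_f(2)[OF j J(1) meas_sum fp_sum] rZ[of j] j J by auto
  have intj: "integrable M (\<lambda>\<omega>. (X j \<omega> + Y j \<omega>) / Dsum J \<omega>)" if j: "j \<in> J" for j
    using int_cong_f(1)[OF j J(1) meas_sum fp_sum] by simp
  have step3: "(\<Sum>j\<in>J. expectation (\<lambda>\<omega>. (X j \<omega> + Y j \<omega>) / Dsum J \<omega>)) = expectation (\<lambda>\<omega>. Dsum J \<omega> / Dsum J \<omega>)"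
  proof -
    have "(\<Sum>j\<in>J. expectation (\<lambda>\<omega>. (X j \<omega> + Y j \<omega>) / Dsum J \<omega>)) = expectation (\<lambda>\<omega>. \<Sum>j\<in>J. (X j \<omega> + Y j \<omega>) / Dsum J \<omega>)"
      using Bochner_Integration.integral_sum[where I=J and f="\<lambda>j \<omega>. (X j \<omega> + Y j \<omega>) / Dsum J \<omega>" and M=M] intj by simp
    also have "\<dots> = expectation (\<lambda>\<omega>. Dsum J \<omega> / Dsum J \<omega>)"
      by (simp only: Dsum_def sum_divide_distrib)
    finally show ?thesis .
  qed
  have step4: "expectation (\<lambda>\<omega>. Dsum J \<omega> / Dsum J \<omega>) \<le> 1"
  proof -
    have "expectation (\<lambda>\<omega>. Dsum J \<omega> / Dsum J \<omega>) \<le> expectation (\<lambda>\<omega>. 1::real)"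
    proof (rule integral_mono)
      show "integrable M (\<lambda>\<omega>. Dsum J \<omega> / Dsum J \<omega>)"
        by (rule integrable_const_bound[where B=1]) (use Dsum_meas[OF J(1)] in auto)
      show "integrable M (\<lambda>\<omega>. 1::real)" by simp
      show "Dsum J \<omega> / Dsum J \<omega> \<le> 1" for \<omega> by (cases "Dsum J \<omega> = 0") auto
    qed
    then show ?thesis using prob_space by simp
  qed
  have "nu * a = (\<Sum>j\<in>J. r j * a)" unfolding nu_def by (simp add: sum_distrib_right)
  also have "\<dots> \<le> (\<Sum>j\<in>J. r j * expectation (\<lambda>\<omega>. 1 / (1 + Dsum (J - {j}) \<omega>)))"
    using step1 r_nn J by (intro sum_mono mult_left_mono) auto
  also have "\<dots> = (\<Sum>j\<in>J. expectation (\<lambda>\<omega>. (X j \<omega> + Y j \<omega>) / Dsum J \<omega>))"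
    using step2 by simp
  also have "\<dots> \<le> 1" using step3 step4 by simp
  finally have na: "nu * a \<le> 1" .
  have nupos: "0 < nu" using nu_ge mu1 by simp
  have "a \<le> 1 / nu" using na nupos by (simp add: field_simps)
  also have "\<dots> \<le> 1 / (mu - 1)" using nu_ge mu1 by (intro divide_left_mono) auto
  finally show ?thesis unfolding a_def J_def mu_def .
qed


lemma key_B:
  fixes f :: "real \<times> real \<Rightarrow> real"
  assumes f: "f \<in> borel_measurable (borel \<Otimes>\<^sub>M borel)"
    and fp: "\<And>x y. x \<in> {0,1} \<Longrightarrow> y \<in> {0,1} \<Longrightarrow> x * y = 0 \<Longrightarrow> f (x,y) \<in> {0,1} \<and> (f (x,y) = 1 \<longrightarrow> x + y = 1)"
    and mu: "1 < (\<Sum>k<m. expectation (X k)) + (\<Sum>k<m. expectation (Y k))"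
  shows "integrable M (\<lambda>\<omega>. (\<Sum>i<m. f (X i \<omega>, Y i \<omega>)) / Dsum {..<m} \<omega>)"
    and "expectation (\<lambda>\<omega>. (\<Sum>i<m. f (X i \<omega>, Y i \<omega>)) / Dsum {..<m} \<omega>)
      \<le> (\<Sum>i<m. expectation (\<lambda>\<omega>. f (X i \<omega>, Y i \<omega>))) / ((\<Sum>k<m. expectation (X k)) + (\<Sum>k<m. expectation (Y k)) - 1)"
proof -
  define mu where "mu = (\<Sum>k<m. expectation (X k)) + (\<Sum>k<m. expectation (Y k))"
  have eqf: "(\<lambda>\<omega>. (\<Sum>i<m. f (X i \<omega>, Y i \<omega>)) / Dsum {..<m} \<omega>) = (\<lambda>\<omega>. \<Sum>i<m. f (X i \<omega>, Y i \<omega>) / Dsum {..<m} \<omega>)"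
    by (simp add: sum_divide_distrib)
  have ints: "integrable M (\<lambda>\<omega>. f (X i \<omega>, Y i \<omega>) / Dsum {..<m} \<omega>)" if "i \<in> {..<m}" for i
    by (rule int_cong_f(1)[OF that _ f fp]) auto
  show "integrable M (\<lambda>\<omega>. (\<Sum>i<m. f (X i \<omega>, Y i \<omega>)) / Dsum {..<m} \<omega>)"
    unfolding eqf using Bochner_Integration.integrable_sum[where I="{..<m}" and f="\<lambda>i \<omega>. f (X i \<omega>, Y i \<omega>) / Dsum {..<m} \<omega>" and M=M] ints
    by simp
  have "expectation (\<lambda>\<omega>. (\<Sum>i<m. f (X i \<omega>, Y i \<omega>)) / Dsum {..<m} \<omega>)
     = (\<Sum>i<m. expectation (\<lambda>\<omega>. f (X i \<omega>, Y i \<omega>) / Dsum {..<m} \<omega>))"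
    unfolding eqf using Bochner_Integration.integral_sum[where I="{..<m}" and f="\<lambda>i \<omega>. f (X i \<omega>, Y i \<omega>) / Dsum {..<m} \<omega>" and M=M] ints
    by simp
  also have "\<dots> = (\<Sum>i<m. expectation (\<lambda>\<omega>. f (X i \<omega>, Y i \<omega>)) * expectation (\<lambda>\<omega>. 1 / (1 + Dsum ({..<m} - {i}) \<omega>)))"
    by (intro sum.cong refl int_cong_f(2)[OF _ _ f fp]) auto
  also have "\<dots> \<le> (\<Sum>i<m. expectation (\<lambda>\<omega>. f (X i \<omega>, Y i \<omega>)) * (1 / (mu - 1)))"
    unfolding mu_def
    by (intro sum_mono mult_left_mono key_C[OF _ mu] E_nonneg[OF _ fp]) auto
  also have "\<dots> = (\<Sum>i<m. expectation (\<lambda>\<omega>. f (X i \<omega>, Y i \<omega>))) / (mu - 1)"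
    by (simp add: sum_divide_distrib)
  finally show "expectation (\<lambda>\<omega>. (\<Sum>i<m. f (X i \<omega>, Y i \<omega>)) / Dsum {..<m} \<omega>)
      \<le> (\<Sum>i<m. expectation (\<lambda>\<omega>. f (X i \<omega>, Y i \<omega>))) / ((\<Sum>k<m. expectation (X k)) + (\<Sum>k<m. expectation (Y k)) - 1)"
    unfolding mu_def .
qed

end


lemma ratio_hi_eq: "ratio_hi x y = x / (x + y)"
  unfolding ratio_hi_def by simp

lemma ratio_lo_eq: "ratio_lo x y = 1 - y / (x + y)"
  unfolding ratio_lo_def by (cases "x + y = 0") (auto simp: field_simps)

theorem theorem3:
  fixes M :: "'a measure" and X Y :: "nat \<Rightarrow> 'a \<Rightarrow> real" and m :: nat
  assumes "prob_space M"
    and "prob_space.indep_vars M (\<lambda>i. borel \<Otimes>\<^sub>M borel) (\<lambda>i \<omega>. (X i \<omega>, Y i \<omega>)) {..<m}"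
    and "\<And>i. i < m \<Longrightarrow> AE \<omega> in M. X i \<omega> \<in> {0, 1}"
    and "\<And>i. i < m \<Longrightarrow> AE \<omega> in M. Y i \<omega> \<in> {0, 1}"
    and "\<And>i. i < m \<Longrightarrow> prob_space.expectation M (\<lambda>\<omega>. X i \<omega> * Y i \<omega>) = 0"
    and "(\<Sum>i<m. prob_space.expectation M (X i)) + (\<Sum>i<m. prob_space.expectation M (Y i)) > 1"
  shows "(((\<Sum>i<m. prob_space.expectation M (X i)) - 1) /
           ((\<Sum>i<m. prob_space.expectation M (X i)) + (\<Sum>i<m. prob_space.expectation M (Y i)) - 1)
         \<le> prob_space.expectation M (\<lambda>\<omega>. ratio_lo (\<Sum>i<m. X i \<omega>) (\<Sum>i<m. Y i \<omega>))) \<and>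
         (prob_space.expectation M (\<lambda>\<omega>. ratio_hi (\<Sum>i<m. X i \<omega>) (\<Sum>i<m. Y i \<omega>))
         \<le> (\<Sum>i<m. prob_space.expectation M (X i)) /
           ((\<Sum>i<m. prob_space.expectation M (X i)) + (\<Sum>i<m. prob_space.expectation M (Y i)) - 1))"
proof -
  interpret prob_space M by fact
  have pm: "(\<lambda>\<omega>. (X i \<omega>, Y i \<omega>)) \<in> M \<rightarrow>\<^sub>M borel \<Otimes>\<^sub>M borel" if "i < m" for i
    using assms(2) that unfolding indep_vars_def by auto
  have Xm: "X i \<in> borel_measurable M" if "i < m" for i
    using measurable_compose[OF pm[OF that] measurable_fst] by simp
  have Ym: "Y i \<in> borel_measurable M" if "i < m" for i
    using measurable_compose[OF pm[OF that] measurable_snd] by simp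
  have XY0: "AE \<omega> in M. X i \<omega> * Y i \<omega> = 0" if i: "i < m" for i
  proof -
    have b: "AE \<omega> in M. X i \<omega> \<in> {0,1} \<and> Y i \<omega> \<in> {0,1}"
      using assms(3)[OF i] assms(4)[OF i] by eventually_elim auto
    have int: "integrable M (\<lambda>\<omega>. X i \<omega> * Y i \<omega>)"
    proof (rule integrable_const_bound[where B=1])
      show "AE \<omega> in M. norm (X i \<omega> * Y i \<omega>) \<le> 1" using b by eventually_elim auto
    qed (use Xm[OF i] Ym[OF i] in measurable)
    have nn: "AE \<omega> in M. 0 \<le> X i \<omega> * Y i \<omega>" using b by eventually_elim auto
    show ?thesis using integral_nonneg_eq_0_iff_AE[OF int nn] assms(5)[OF i] by simp
  qed
  have good: "AE \<omega> in M. \<forall>i\<in>{..<m}. X i \<omega> \<in> {0,1} \<and> Y i \<omega> \<in> {0,1} \<and> X i \<omega> * Y i \<omega> = 0"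
  proof (rule AE_finite_allI)
    fix i assume "i \<in> {..<m}"
    then have i: "i < m" by simp
    show "AE \<omega> in M. X i \<omega> \<in> {0,1} \<and> Y i \<omega> \<in> {0,1} \<and> X i \<omega> * Y i \<omega> = 0"
      using assms(3)[OF i] assms(4)[OF i] XY0[OF i] by eventually_elim auto
  qed simp
  interpret B: bsetup M X Y m
    by unfold_locales (use assms(2) good in auto)
  have D: "B.Dsum {..<m} \<omega> = (\<Sum>i<m. X i \<omega>) + (\<Sum>i<m. Y i \<omega>)" for \<omega>
    unfolding B.Dsum_def by (simp add: sum.distrib)
  have hi: "(\<lambda>\<omega>. ratio_hi (\<Sum>i<m. X i \<omega>) (\<Sum>i<m. Y i \<omega>)) = (\<lambda>\<omega>. (\<Sum>i<m. fst (X i \<omega>, Y i \<omega>)) / B.Dsum {..<m} \<omega>)"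
    by (simp add: ratio_hi_eq D)
  have lo: "(\<lambda>\<omega>. ratio_lo (\<Sum>i<m. X i \<omega>) (\<Sum>i<m. Y i \<omega>)) = (\<lambda>\<omega>. 1 - (\<Sum>i<m. snd (X i \<omega>, Y i \<omega>)) / B.Dsum {..<m} \<omega>)"
    by (simp add: ratio_lo_eq D)
  have fpf: "\<And>x y::real. x \<in> {0,1} \<Longrightarrow> y \<in> {0,1} \<Longrightarrow> x * y = 0 \<Longrightarrow> fst (x,y) \<in> {0,1} \<and> (fst (x,y) = 1 \<longrightarrow> x + y = 1)"
    by auto
  have fps: "\<And>x y::real. x \<in> {0,1} \<Longrightarrow> y \<in> {0,1} \<Longrightarrow> x * y = 0 \<Longrightarrow> snd (x,y) \<in> {0,1} \<and> (snd (x,y) = 1 \<longrightarrow> x + y = 1)"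
    by auto
  have mu: "1 < (\<Sum>k<m. expectation (X k)) + (\<Sum>k<m. expectation (Y k))" using assms(6) by simp
  have mf: "fst \<in> borel_measurable (borel \<Otimes>\<^sub>M (borel :: real measure))" by measurable
  have ms: "snd \<in> borel_measurable ((borel :: real measure) \<Otimes>\<^sub>M borel)" by measurable
  note Bx = B.key_B[OF mf fpf mu]
  note By = B.key_B[OF ms fps mu]
  have upper: "expectation (\<lambda>\<omega>. ratio_hi (\<Sum>i<m. X i \<omega>) (\<Sum>i<m. Y i \<omega>))
    \<le> (\<Sum>i<m. expectation (X i)) / ((\<Sum>k<m. expectation (X k)) + (\<Sum>k<m. expectation (Y k)) - 1)"
    unfolding hi using Bx(2) by simp
  have yb: "expectation (\<lambda>\<omega>. (\<Sum>i<m. Y i \<omega>) / B.Dsum {..<m} \<omega>)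
    \<le> (\<Sum>i<m. expectation (Y i)) / ((\<Sum>k<m. expectation (X k)) + (\<Sum>k<m. expectation (Y k)) - 1)"
    using By(2) by simp
  have yi: "integrable M (\<lambda>\<omega>. (\<Sum>i<m. Y i \<omega>) / B.Dsum {..<m} \<omega>)" using By(1) by simp
  have elo: "expectation (\<lambda>\<omega>. ratio_lo (\<Sum>i<m. X i \<omega>) (\<Sum>i<m. Y i \<omega>))
     = 1 - expectation (\<lambda>\<omega>. (\<Sum>i<m. Y i \<omega>) / B.Dsum {..<m} \<omega>)"
    unfolding lo using yi prob_space by simp
  define a where "a = (\<Sum>k<m. expectation (X k))"
  define b where "b = (\<Sum>k<m. expectation (Y k))"
  have ab: "1 < a + b" using mu unfolding a_def b_def .
  have "(a - 1) / (a + b - 1) = 1 - b / (a + b - 1)" using ab by (simp add: field_simps)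
  also have "\<dots> \<le> expectation (\<lambda>\<omega>. ratio_lo (\<Sum>i<m. X i \<omega>) (\<Sum>i<m. Y i \<omega>))"
    using elo yb unfolding a_def b_def by simp
  finally have lower: "(a - 1) / (a + b - 1) \<le> expectation (\<lambda>\<omega>. ratio_lo (\<Sum>i<m. X i \<omega>) (\<Sum>i<m. Y i \<omega>))" .
  show ?thesis using lower upper unfolding a_def b_def by simp
qed

end
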